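(* Let $\boldsymbol J=(J_x)_{x\in\Sigma}$ be weights on $\Sigma=\mathsf V\cup\mathsf E$ (the vertices and nearest-neighbour edges of $\mathbb Z^d$) which are almost surely generic, and let $M$ and $M'$ be ground states for $\boldsymbol J$ in $\mathbb Z^d$. Then (almost surely) $M\,\Delta\,M'$ is a disjoint union of simple infinite and bi-infinite paths.
   Context: A matching of $\mathbb Z^d$ is a set $M\subset\Sigma$ such that every vertex either belongs to $M$ or is an endpoint of exactly one edge of $M$, but not both. For matchings $M,M'$ with $M\Delta M'$ finite, $H(M)-H(M')=\sum_{x\in M\setminus M'}J_x-\sum_{y\in M'\setminus M}J_y$. $M$ is a ground state of $\boldsymbol J$ if there is no matching $M'$ with $M\Delta M'$ finite and $H(M)-H(M')>0$. Weights are generic if for every finite $S\subset\Sigma$ and integers $(k_x)_{x\in S}$ not all zero, $\sum_{x\in S}k_xJ_x\ne0$. A simple infinite path is a sequence $(v_1,(v_1,v_2),(v_2,v_3),\dots)$ with the $v_i$ distinct and $v_i\sim v_{i+1}$; a bi-infinite path is a bi-infinite sequence of edges $(\dots,(v_{-1},v_0),(v_0,v_1),(v_1,v_2),\dots)$ with the $v_i$ distinct. *)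

theory Defs
  imports "HOL-Analysis.Finite_Cartesian_Product"
begin

text \<open>Vertices of Z^d are vectors int^'d ('d a finite index type, d = CARD('d)).
  A site is either a vertex (Inl v) or an edge (Inr e), an edge being the
  two-element set of its endpoints.\<close>

type_synonym 'd vtx = "int ^ 'd"
type_synonym 'd site = "'d vtx + 'd vtx set"

definition adj :: "'d::finite vtx \<Rightarrow> 'd vtx \<Rightarrow> bool" where
  "adj u v \<longleftrightarrow> (\<Sum>i\<in>UNIV. \<bar>u $ i - v $ i\<bar>) = 1"

definition Edges :: "'d::finite vtx set set" where
  "Edges = {{u, v} | u v. adj u v}"

definition Sigma_sites :: "'d::finite site set" where
  "Sigma_sites = range Inl \<union> Inr ` Edges"

definition is_matching :: "'d::finite site set \<Rightarrow> bool" where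
  "is_matching M \<longleftrightarrow> M \<subseteq> Sigma_sites \<and>
     (\<forall>v. (Inl v \<in> M \<and> (\<forall>e. Inr e \<in> M \<longrightarrow> v \<notin> e)) \<or>
          (Inl v \<notin> M \<and> (\<exists>!e. Inr e \<in> M \<and> v \<in> e)))"

definition Hdiff :: "('d::finite site \<Rightarrow> real) \<Rightarrow> 'd site set \<Rightarrow> 'd site set \<Rightarrow> real" where
  "Hdiff J M M' = (\<Sum>x\<in>M - M'. J x) - (\<Sum>y\<in>M' - M. J y)"

definition ground_state :: "('d::finite site \<Rightarrow> real) \<Rightarrow> 'd site set \<Rightarrow> bool" where
  "ground_state J M \<longleftrightarrow> is_matching M \<and>
     \<not> (\<exists>M'. is_matching M' \<and> finite (M \<union> M' - M \<inter> M') \<and> Hdiff J M M' > 0)"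

definition generic :: "('d::finite site \<Rightarrow> real) \<Rightarrow> bool" where
  "generic J \<longleftrightarrow> (\<forall>S k. finite S \<and> S \<subseteq> Sigma_sites \<and> (\<exists>x\<in>S. k x \<noteq> (0::int))
                     \<longrightarrow> (\<Sum>x\<in>S. of_int (k x) * J x) \<noteq> 0)"

definition simple_inf_path :: "'d::finite site set \<Rightarrow> bool" where
  "simple_inf_path P \<longleftrightarrow> (\<exists>v :: nat \<Rightarrow> 'd vtx. inj v \<and> (\<forall>i. adj (v i) (v (Suc i))) \<and>
      P = {Inl (v 0)} \<union> range (\<lambda>i. Inr {v i, v (Suc i)}))"

definition biinf_path :: "'d::finite site set \<Rightarrow> bool" where
  "biinf_path P \<longleftrightarrow> (\<exists>v :: int \<Rightarrow> 'd vtx. inj v \<and> (\<forall>i. adj (v i) (v (i + 1))) \<and>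
      P = range (\<lambda>i. Inr {v i, v (i + 1)}))"

end

theory Submission
  imports Defs
begin

definition covers :: "'d::finite site \<Rightarrow> 'd vtx \<Rightarrow> bool" where
  "covers s v \<longleftrightarrow> s = Inl v \<or> (\<exists>e. s = Inr e \<and> v \<in> e)"

lemma adj_irrefl: "\<not> adj (v::'d::finite vtx) v"
  by (simp add: adj_def)

lemma adj_sym: "adj (u::'d::finite vtx) v \<Longrightarrow> adj v u"
  unfolding adj_def by (simp add: abs_minus_commute)

lemma Sigma_edge: "Inr e \<in> (Sigma_sites :: 'd::finite site set) \<Longrightarrow> \<exists>a b. e = {a,b} \<and> adj a b"
  unfolding Sigma_sites_def Edges_def by auto

lemma matching_iff:
  "is_matching N \<longleftrightarrow> N \<subseteq> Sigma_sites \<and> (\<forall>v. \<exists>!s. s \<in> N \<and> covers s v)"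
proof -
  have "((Inl v \<in> N \<and> (\<forall>e. Inr e \<in> N \<longrightarrow> v \<notin> e)) \<or> (Inl v \<notin> N \<and> (\<exists>!e. Inr e \<in> N \<and> v \<in> e)))
     \<longleftrightarrow> (\<exists>!s. s \<in> N \<and> covers s v)" for v
  proof
    assume L: "(Inl v \<in> N \<and> (\<forall>e. Inr e \<in> N \<longrightarrow> v \<notin> e)) \<or> (Inl v \<notin> N \<and> (\<exists>!e. Inr e \<in> N \<and> v \<in> e))"
    then show "\<exists>!s. s \<in> N \<and> covers s v"
    proof
      assume a: "Inl v \<in> N \<and> (\<forall>e. Inr e \<in> N \<longrightarrow> v \<notin> e)"
      show ?thesis by (rule ex1I[of _ "Inl v"]) (use a in \<open>auto simp: covers_def\<close>)
    next
      assume a: "Inl v \<notin> N \<and> (\<exists>!e. Inr e \<in> N \<and> v \<in> e)"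
      then obtain e where e: "Inr e \<in> N" "v \<in> e" and u: "\<And>e'. Inr e' \<in> N \<Longrightarrow> v \<in> e' \<Longrightarrow> e' = e" by blast
      show ?thesis
      proof (rule ex1I[of _ "Inr e"])
        show "Inr e \<in> N \<and> covers (Inr e) v" using e by (simp add: covers_def)
      next
        fix y assume y: "y \<in> N \<and> covers y v"
        then have "y \<noteq> Inl v" using a by blast
        then obtain e' where "y = Inr e'" "v \<in> e'" using y by (auto simp: covers_def)
        then show "y = Inr e" using u y by blast
      qed
    qed
  next
    assume R: "\<exists>!s. s \<in> N \<and> covers s v"
    then obtain s where s: "s \<in> N" "covers s v" and u: "\<And>t. t \<in> N \<Longrightarrow> covers t v \<Longrightarrow> t = s" by blast
    show "(Inl v \<in> N \<and> (\<forall>e. Inr e \<in> N \<longrightarrow> v \<notin> e)) \<or> (Inl v \<notin> N \<and> (\<exists>!e. Inr e \<in> N \<and> v \<in> e))"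
    proof (cases "s = Inl v")
      case True
      then show ?thesis using s u by (force simp: covers_def)
    next
      case False
      then obtain e where e: "s = Inr e" "v \<in> e" using s(2) by (auto simp: covers_def)
      have "Inl v \<notin> N" using u e by (force simp: covers_def)
      moreover have "\<exists>!e. Inr e \<in> N \<and> v \<in> e"
        by (rule ex1I[of _ e]) (use s e u in \<open>force simp: covers_def\<close>)+
      ultimately show ?thesis by blast
    qed
  qed
  then show ?thesis unfolding is_matching_def by simp
qed

definition cov :: "'d::finite site set \<Rightarrow> 'd vtx \<Rightarrow> 'd site" where
  "cov N v = (THE s. s \<in> N \<and> covers s v)"

definition oth :: "'d::finite site set \<Rightarrow> 'd vtx \<Rightarrow> 'd vtx" where
  "oth N v = (case cov N v of Inl _ \<Rightarrow> v | Inr e \<Rightarrow> (THE w. w \<in> e \<and> w \<noteq> v))"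

lemma matching_ex1:
  assumes "is_matching N" shows "\<exists>!s. s \<in> N \<and> covers s v"
  using spec[OF conjunct2[OF iffD1[OF matching_iff assms]]] .

lemma matching_Sigma:
  assumes "is_matching N" shows "N \<subseteq> Sigma_sites"
  using conjunct1[OF iffD1[OF matching_iff assms]] .

lemma cov_in:
  assumes "is_matching N"
  shows "cov N v \<in> N" "covers (cov N v) v"
proof -
  have "\<exists>!s. s \<in> N \<and> covers s v" by (rule matching_ex1[OF assms(1)])
  from theI'[OF this] show "cov N v \<in> N" "covers (cov N v) v" unfolding cov_def by auto
qed

lemma cov_unique:
  assumes "is_matching N" "s \<in> N" "covers s v"
  shows "cov N v = s"
proof -
  have "\<exists>!s. s \<in> N \<and> covers s v" by (rule matching_ex1[OF assms(1)])
  then show ?thesis unfolding cov_def using assms by (simp add: the1_equality)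
qed

lemma cov_eq_iff:
  assumes "is_matching N" "covers s v"
  shows "cov N v = s \<longleftrightarrow> s \<in> N"
  using assms cov_unique cov_in by metis

lemma cov_Sigma:
  assumes "is_matching N" shows "cov N v \<in> Sigma_sites"
  using cov_in(1)[OF assms] conjunct1[OF iffD1[OF matching_iff assms]] by blast

lemma cov_cases:
  assumes "is_matching N"
  shows "(cov N v = Inl v \<and> oth N v = v) \<or> (cov N v = Inr {v, oth N v} \<and> adj v (oth N v))"
proof (cases "cov N v")
  case (Inl x)
  then have "x = v" using cov_in(2)[OF assms, of v] by (simp add: covers_def)
  then show ?thesis using Inl by (simp add: oth_def)
next
  case (Inr e)
  obtain a b where ab: "e = {a,b}" "adj a b" using Sigma_edge cov_Sigma[OF assms, of v] Inr by metis
  have ne: "a \<noteq> b" using ab adj_irrefl by metis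
  have ve: "v \<in> e" using cov_in(2)[OF assms, of v] Inr by (simp add: covers_def)
  define w where "w = (if v = a then b else a)"
  have w1: "w \<in> e" "w \<noteq> v" "e = {v, w}" using ab ne ve by (auto simp: w_def)
  have "(THE w. w \<in> e \<and> w \<noteq> v) = w"
    by (rule the_equality) (use w1 ab ne ve in auto)
  then have o: "oth N v = w" using Inr by (simp add: oth_def)
  have "adj v w" using ab ne ve w_def adj_sym by auto
  then show ?thesis using Inr o w1 by simp
qed

lemma covers_oth:
  assumes "is_matching N" shows "covers (cov N v) (oth N v)"
  using cov_cases[OF assms, of v] by (auto simp: covers_def)

lemma cov_oth:
  assumes "is_matching N" shows "cov N (oth N v) = cov N v"
  using cov_unique[OF assms cov_in(1)[OF assms] covers_oth[OF assms]] .

lemma oth_oth: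
  assumes "is_matching N" shows "oth N (oth N v) = v"
proof -
  have c: "cov N (oth N v) = cov N v" by (rule cov_oth[OF assms])
  show ?thesis
    using cov_cases[OF assms, of v] cov_cases[OF assms, of "oth N v"] c adj_irrefl
    by (auto simp: doubleton_eq_iff)
qed

lemma swap_matching:
  assumes m: "is_matching M" and m': "is_matching M'"
    and C: "C \<subseteq> (M - M') \<union> (M' - M)"
    and cl: "\<And>t w. t \<in> C \<Longrightarrow> covers t w \<Longrightarrow> cov M w \<in> C \<and> cov M' w \<in> C"
  shows "is_matching ((M - C) \<union> (C \<inter> M'))"
  unfolding matching_iff
proof (intro conjI allI)
  show "M - C \<union> C \<inter> M' \<subseteq> Sigma_sites" using matching_Sigma[OF m] matching_Sigma[OF m'] by blast
next
  fix v
  show "\<exists>!s. s \<in> M - C \<union> C \<inter> M' \<and> covers s v"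
  proof (cases "\<exists>t\<in>C. covers t v")
    case True
    then obtain t where "t \<in> C" "covers t v" by blast
    then have a: "cov M v \<in> C" "cov M' v \<in> C" using cl by blast+
    show ?thesis
    proof (rule ex1I[of _ "cov M' v"])
      have "cov M' v \<in> C \<inter> M'" using a(2) cov_in(1)[OF m'] by blast
      then show "cov M' v \<in> M - C \<union> C \<inter> M' \<and> covers (cov M' v) v"
        using cov_in(2)[OF m'] by blast
    next
      fix s assume s: "s \<in> M - C \<union> C \<inter> M' \<and> covers s v"
      then have sv: "covers s v" by blast
      from s have "s \<in> M - C \<or> s \<in> C \<inter> M'" by blast
      then show "s = cov M' v"
      proof
        assume s1: "s \<in> M - C"
        then have "s = cov M v" using cov_unique[OF m _ sv] by simp
        then show ?thesis using s1 a(1) by simp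
      next
        assume "s \<in> C \<inter> M'"
        then show ?thesis using cov_unique[OF m' _ sv] by simp
      qed
    qed
  next
    case False
    show ?thesis
    proof (rule ex1I[of _ "cov M v"])
      have "cov M v \<notin> C" using False cov_in(2)[OF m] by blast
      then show "cov M v \<in> M - C \<union> C \<inter> M' \<and> covers (cov M v) v"
        using cov_in[OF m] by blast
    next
      fix s assume s: "s \<in> M - C \<union> C \<inter> M' \<and> covers s v"
      then have sv: "covers s v" by blast
      have "s \<notin> C" using False sv by blast
      then have "s \<in> M" using s by blast
      then show "s = cov M v" using cov_unique[OF m _ sv] by simp
    qed
  qed
qed

lemma no_finite_closed:
  assumes gen: "generic J" and g: "ground_state J M" and g': "ground_state J M'"
    and C: "C \<subseteq> (M - M') \<union> (M' - M)" "finite C" "C \<noteq> {}"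
    and cl: "\<And>t w. t \<in> C \<Longrightarrow> covers t w \<Longrightarrow> cov M w \<in> C \<and> cov M' w \<in> C"
  shows False
proof -
  have m: "is_matching M" and m': "is_matching M'" using g g' unfolding ground_state_def by auto
  define M2 where "M2 = (M - C) \<union> (C \<inter> M')"
  define M3 where "M3 = (M' - C) \<union> (C \<inter> M)"
  have mm2: "is_matching M2" unfolding M2_def by (rule swap_matching[OF m m' C(1) cl])
  have mm3: "is_matching M3" unfolding M3_def
    by (rule swap_matching[OF m' m]) (use C(1) cl in auto)
  have f2: "finite (M \<union> M2 - M \<inter> M2)"
    by (rule finite_subset[OF _ C(2)]) (use C(1) in \<open>auto simp: M2_def\<close>)
  have f3: "finite (M' \<union> M3 - M' \<inter> M3)"
    by (rule finite_subset[OF _ C(2)]) (use C(1) in \<open>auto simp: M3_def\<close>)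
  have d2: "M - M2 = C \<inter> M" "M2 - M = C - M" using C(1) by (auto simp: M2_def)
  have d3: "M' - M3 = C - M" "M3 - M' = C \<inter> M" using C(1) by (auto simp: M3_def)
  have h2: "\<not> Hdiff J M M2 > 0" using g mm2 f2 unfolding ground_state_def by blast
  have h3: "\<not> Hdiff J M' M3 > 0" using g' mm3 f3 unfolding ground_state_def by blast
  have eq: "sum J (C \<inter> M) - sum J (C - M) = 0"
    using h2 h3 unfolding Hdiff_def d2 d3 by linarith
  define k where "k x = (if x \<in> M then 1 else (-1::int))" for x
  have CS: "C \<subseteq> Sigma_sites" using C(1) matching_Sigma[OF m] matching_Sigma[OF m'] by blast
  have "(\<Sum>x\<in>C. of_int (k x) * J x) = (\<Sum>x\<in>C. if x \<in> M then J x else - J x)"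
    by (rule sum.cong) (auto simp: k_def)
  also have "\<dots> = sum J (C \<inter> M) - sum J (C - M)"
    using C(2) by (simp add: sum.If_cases sum_negf Diff_eq)
  finally have "(\<Sum>x\<in>C. of_int (k x) * J x) = 0" using eq by simp
  moreover have "\<exists>x\<in>C. k x \<noteq> 0" using C(3) by (auto simp: k_def)
  ultimately show False using gen C(2) CS unfolding generic_def by blast
qed

lemma walk_exists:
  assumes inv: "\<And>i x. \<sigma> i (\<sigma> i x) = x"
  shows "\<exists>v::int \<Rightarrow> 'a. v 0 = x0 \<and> (\<forall>i. v (i+1) = \<sigma> i (v i))"
proof -
  define fw where "fw = rec_nat x0 (\<lambda>n w. \<sigma> (int n) w)"
  define bw where "bw = rec_nat x0 (\<lambda>n w. \<sigma> (- int n - 1) w)"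
  define v where "v i = (if i \<ge> 0 then fw (nat i) else bw (nat (-i)))" for i
  have fw0: "fw 0 = x0" and fwS: "fw (Suc n) = \<sigma> (int n) (fw n)" for n by (simp_all add: fw_def)
  have bw0: "bw 0 = x0" and bwS: "bw (Suc n) = \<sigma> (- int n - 1) (bw n)" for n by (simp_all add: bw_def)
  have "v (i+1) = \<sigma> i (v i)" for i
  proof (cases "i \<ge> 0")
    case True
    then have "nat (i+1) = Suc (nat i)" by simp
    then show ?thesis using True by (simp add: v_def fwS)
  next
    case False
    define n where "n = nat (- i - 1)"
    have i: "i = - int n - 1" using False by (simp add: n_def)
    have "v i = bw (Suc n)" using False by (simp add: v_def i nat_add_distrib)
    moreover have "v (i+1) = bw n"
      by (cases "n = 0") (simp_all add: v_def i bw0 fw0)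
    ultimately show ?thesis using inv by (simp add: bwS i)
  qed
  moreover have "v 0 = x0" by (simp add: v_def fw0)
  ultimately show ?thesis by blast
qed

definition par :: "'d::finite vtx \<Rightarrow> bool" where
  "par w \<longleftrightarrow> even (\<Sum>k\<in>UNIV. w $ k)"

lemma adj_par:
  assumes "adj u (w::'d::finite vtx)" shows "par u \<noteq> par w"
proof -
  have s: "(\<Sum>k\<in>UNIV. \<bar>u $ k - w $ k\<bar>) = 1" using assms by (simp add: adj_def)
  have "even ((\<Sum>k\<in>UNIV. \<bar>u $ k - w $ k\<bar>) - (\<Sum>k\<in>UNIV. u $ k - w $ k))"
    unfolding sum_subtractf[symmetric]
  proof (rule dvd_sum)
    fix k
    show "even (\<bar>u $ k - w $ k\<bar> - (u $ k - w $ k))"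
      by (cases "u $ k - w $ k \<ge> 0") simp_all
  qed
  then have "odd ((\<Sum>k\<in>UNIV. u $ k) - (\<Sum>k\<in>UNIV. w $ k))"
    using s by (simp add: sum_subtractf)
  then show ?thesis unfolding par_def by auto
qed

lemma even_shift: "(b::int) = a + 2 * c \<Longrightarrow> even a = even b" by simp

locale walk =
  fixes M M' :: "'d::finite site set" and v :: "int \<Rightarrow> 'd vtx"
  assumes mM: "is_matching M" and mM': "is_matching M'"
    and step: "\<And>i. v (i+1) = oth (if even i then M else M') (v i)"
    and good0: "cov M (v 0) \<noteq> cov M' (v 0)"
begin

definition NN :: "int \<Rightarrow> 'd site set" where "NN i = (if even i then M else M')"

lemma mNN: "is_matching (NN i)" using mM mM' by (simp add: NN_def)

lemma NN_eq: "even i = even j \<Longrightarrow> NN i = NN j" by (simp add: NN_def)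

lemma stepN: "v (i+1) = oth (NN i) (v i)" using step by (simp add: NN_def)

lemma bkw1: "v i = oth (NN i) (v (i+1))"
  by (simp only: stepN oth_oth[OF mNN])

lemma bkw2: "v (i - 1) = oth (NN (i - 1)) (v i)"
  using bkw1[of "i - 1"] by simp

definition site :: "int \<Rightarrow> 'd site" where "site i = cov (NN i) (v i)"

lemma site_next: "site i = cov (NN i) (v (i+1))"
  unfolding site_def stepN by (simp only: cov_oth[OF mNN])

lemma good_step: "cov M (v i) = cov M' (v i) \<longleftrightarrow> cov M (v (i+1)) = cov M' (v (i+1))"
proof -
  have c1: "covers (site i) (v i)" using cov_in(2)[OF mNN] by (simp add: site_def)
  have c2: "covers (site i) (v (i+1))" using cov_in(2)[OF mNN] site_next by metis
  show ?thesis
  proof (cases "even i")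
    case True
    then have nm: "NN i = M" by (simp add: NN_def)
    have "site i = cov M (v i)" using nm by (simp add: site_def)
    moreover have "site i = cov M (v (i+1))" using nm site_next[of i] by simp
    ultimately show ?thesis using cov_eq_iff[OF mM' c1] cov_eq_iff[OF mM' c2] by metis
  next
    case False
    then have nm: "NN i = M'" by (simp add: NN_def)
    have "site i = cov M' (v i)" using nm by (simp add: site_def)
    moreover have "site i = cov M' (v (i+1))" using nm site_next[of i] by simp
    ultimately show ?thesis using cov_eq_iff[OF mM c1] cov_eq_iff[OF mM c2] by metis
  qed
qed

lemma good: "cov M (v i) \<noteq> cov M' (v i)"
proof (induction i rule: int_induct[where k=0])
  case base then show ?case using good0 .
next
  case (step1 i) then show ?case using good_step by blast
next
  case (step2 i) then show ?case using good_step[of "i - 1"] by simp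
qed

lemma site_D: "site i \<in> (M - M') \<union> (M' - M)"
proof (cases "even i")
  case True
  then have s: "site i = cov M (v i)" by (simp add: site_def NN_def)
  then have "site i \<in> M" using cov_in[OF mM] by simp
  moreover have "site i \<notin> M'" using s good cov_eq_iff[OF mM'] cov_in(2)[OF mM] by metis
  ultimately show ?thesis by blast
next
  case False
  then have s: "site i = cov M' (v i)" by (simp add: site_def NN_def)
  then have "site i \<in> M'" using cov_in[OF mM'] by simp
  moreover have "site i \<notin> M" using s good cov_eq_iff[OF mM] cov_in(2)[OF mM'] by metis
  ultimately show ?thesis by blast
qed

lemma cov_in_range: "cov M (v j) \<in> range site" "cov M' (v j) \<in> range site"
proof -
  have a: "cov (NN j) (v j) = site j" by (simp add: site_def)
  have b: "cov (NN (j - 1)) (v j) = site (j - 1)" using site_next[of "j - 1"] by simp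
  show "cov M (v j) \<in> range site" "cov M' (v j) \<in> range site"
    using a b by (cases "even j"; simp add: NN_def; metis rangeI)+
qed

lemma covers_site: "covers (site i) w \<Longrightarrow> w = v i \<or> w = v (i+1)"
  using cov_cases[OF mNN, of i "v i"] stepN[of i] by (auto simp: site_def covers_def)

lemma closed: "t \<in> range site \<Longrightarrow> covers t w \<Longrightarrow> cov M w \<in> range site \<and> cov M' w \<in> range site"
  using covers_site cov_in_range by blast

lemma site_cases: "site i = Inl (v i) \<and> v (i+1) = v i \<or> site i = Inr {v i, v (i+1)} \<and> adj (v i) (v (i+1))"
  using cov_cases[OF mNN, of i "v i"] stepN[of i] by (auto simp: site_def)

lemma fin_site: "finite (range v) \<Longrightarrow> finite (range site)"
proof -
  assume f: "finite (range v)"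
  have "range site \<subseteq> cov M ` range v \<union> cov M' ` range v"
    by (auto simp: site_def NN_def)
  then show ?thesis using f finite_subset by blast
qed

lemma periodic_fin:
  assumes ij: "v i = v j" "i < j" "even i = even j"
  shows "finite (range v)"
proof -
  have P: "\<exists>l\<in>{i..<j}. v k = v l \<and> (even k \<longleftrightarrow> even l)" for k
  proof (induction k rule: int_induct[where k=i])
    case base then show ?case using ij by (intro bexI[of _ i]) auto
  next
    case (step1 k)
    then obtain l where l: "l \<in> {i..<j}" "v k = v l" "even k \<longleftrightarrow> even l" by blast
    have e: "v (k+1) = v (l+1)" using stepN[of k] stepN[of l] NN_eq[of k l] l by simp
    show ?case
    proof (cases "l + 1 < j")
      case True then show ?thesis using l e by (intro bexI[of _ "l+1"]) auto
    next
      case False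
      then have "l + 1 = j" using l by auto
      then show ?thesis using l e ij by (intro bexI[of _ i]) auto
    qed
  next
    case (step2 k)
    then obtain l where l: "l \<in> {i..<j}" "v k = v l" "even k \<longleftrightarrow> even l" by blast
    have e: "v (k - 1) = v (l - 1)" using bkw2[of k] bkw2[of l] NN_eq[of "k - 1" "l - 1"] l by simp
    show ?case
    proof (cases "i < l")
      case True then show ?thesis using l e by (intro bexI[of _ "l - 1"]) auto
    next
      case False
      then have li: "l = i" using l by auto
      have "v (i - 1) = v (j - 1)" using bkw2[of i] bkw2[of j] NN_eq[of "i - 1" "j - 1"] ij by simp
      then show ?thesis using l e ij li by (intro bexI[of _ "j - 1"]) auto
    qed
  qed
  have "range v \<subseteq> v ` {i..<j}" using P by blast
  then show ?thesis using finite_subset by blast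
qed

definition mono :: "int \<Rightarrow> bool" where "mono i \<longleftrightarrow> (\<exists>x. site i = Inl x)"

lemma nonmono: "\<not> mono i \<Longrightarrow> site i = Inr {v i, v (i+1)} \<and> adj (v i) (v (i+1))"
  using site_cases[of i] by (auto simp: mono_def)

lemma is_mono: "mono i \<Longrightarrow> site i = Inl (v i) \<and> v (i+1) = v i"
  using site_cases[of i] by (auto simp: mono_def)

lemma reflect:
  assumes "mono i0" shows "v (i0 - int k) = v (i0 + 1 + int k)"
proof (induction k)
  case 0 then show ?case using is_mono[OF assms] by simp
next
  case (Suc k)
  have ee: "i0 - int (Suc k) = (i0 - int k) - 1" by simp
  have "v (i0 - int (Suc k)) = oth (NN (i0 - int k - 1)) (v (i0 - int k))"
    unfolding ee by (rule bkw2)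
  also have "\<dots> = oth (NN (i0 + 1 + int k)) (v (i0 + 1 + int k))"
  proof -
    have "even (i0 - int k - 1) = even (i0 + 1 + int k)"
      by (rule even_shift[where c="int k + 1"]) simp
    then show ?thesis using Suc NN_eq[of "i0 - int k - 1" "i0 + 1 + int k"] by simp
  qed
  also have "\<dots> = v (i0 + 1 + int (Suc k))" using stepN[of "i0 + 1 + int k"] by (simp add: add.assoc)
  finally show ?case .
qed

lemma site_reflect:
  assumes "mono i0" shows "site (i0 - 1 - int k) = site (i0 + 1 + int k)"
proof -
  have ee: "i0 - int (Suc k) = i0 - 1 - int k" by simp
  have "site (i0 - 1 - int k) = cov (NN (i0 + 1 + int k)) (v (i0 - int (Suc k)))"
    unfolding site_def ee using NN_eq[of "i0 - 1 - int k" "i0 + 1 + int k"] by simp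
  also have "\<dots> = cov (NN (i0 + 1 + int k)) (v (i0 + 1 + int k + 1))"
    using reflect[OF assms, of "Suc k"] by (simp add: add.assoc)
  also have "\<dots> = site (i0 + 1 + int k)" using site_next by simp
  finally show ?thesis .
qed

lemma two_monos:
  assumes "mono i0" "mono i1" "i0 < i1" shows "finite (range v)"
proof -
  have "v (i0 - int (nat (i1 - i0))) = v (i0 + 1 + int (nat (i1 - i0)))" by (rule reflect[OF assms(1)])
  then have "v (2 * i0 - i1) = v (i1 + 1)" using assms(3) by (simp add: algebra_simps)
  also have "\<dots> = v i1" using is_mono[OF assms(2)] by simp
  finally show ?thesis
    by (rule periodic_fin) (use assms(3) in auto)
qed

end

locale gwalk = walk M M' v for M M' :: "'d::finite site set" and v +
  fixes J :: "'d site \<Rightarrow> real"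
  assumes gen: "generic J" and gs: "ground_state J M" and gs': "ground_state J M'"
begin

lemma infinite_v: "\<not> finite (range v)"
proof
  assume "finite (range v)"
  then have f: "finite (range site)" by (rule fin_site)
  have C1: "range site \<subseteq> (M - M') \<union> (M' - M)" using site_D by blast
  have ne: "range site \<noteq> {}" by blast
  show False by (rule no_finite_closed[OF gen gs gs' C1 f ne closed])
qed

lemma no_rep: "v a = v b \<Longrightarrow> a \<noteq> b \<Longrightarrow> even a = even b \<Longrightarrow> False"
proof -
  assume ab: "v a = v b" "a \<noteq> b" "even a = even b"
  have "finite (range v)"
  proof (cases "a < b")
    case True then show ?thesis using periodic_fin[of a b] ab by simp
  next
    case False then have "b < a" using ab by simp
    then show ?thesis using periodic_fin[of b a] ab by simp
  qed
  then show False using infinite_v by blast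
qed

lemma path: "biinf_path (range site) \<or> simple_inf_path (range site)"
proof (cases "\<exists>i0. mono i0")
  case False
  then have nm: "\<not> mono i" for i by blast
  have pv: "par (v k) = (par (v 0) = even k)" for k
  proof (induction k rule: int_induct[where k=0])
    case base then show ?case by simp
  next
    case (step1 k)
    have "par (v (k+1)) \<noteq> par (v k)" using adj_par[OF conjunct2[OF nonmono[OF nm[of k]]]] by blast
    then show ?case using step1 by auto
  next
    case (step2 k)
    have "adj (v (k - 1)) (v k)" using conjunct2[OF nonmono[OF nm[of "k - 1"]]] by simp
    then have "par (v (k - 1)) \<noteq> par (v k)" using adj_par by blast
    then show ?case using step2 by auto
  qed
  have inj: "inj v"
  proof (rule injI)
    fix a b assume ab: "v a = v b"
    show "a = b"
    proof (rule ccontr)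
      assume "a \<noteq> b"
      moreover have "even a = even b" using pv[of a] pv[of b] ab by auto
      ultimately show False using no_rep ab by blast
    qed
  qed
  have se: "site = (\<lambda>i. Inr {v i, v (i+1)})"
    by (rule ext) (use nonmono nm in blast)
  have ad: "\<forall>i. adj (v i) (v (i+1))" using nonmono nm by blast
  have "biinf_path (range site)"
    unfolding biinf_path_def by (rule exI[of _ v]) (use inj ad se in simp)
  then show ?thesis by blast
next
  case True
  then obtain i0 where m0: "mono i0" by blast
  have nm: "\<not> mono j" if "j \<noteq> i0" for j
  proof
    assume mj: "mono j"
    have "finite (range v)"
    proof (cases "i0 < j")
      case True then show ?thesis using two_monos[OF m0 mj] by simp
    next
      case False then have "j < i0" using that by simp
      then show ?thesis using two_monos[OF mj m0] by simp
    qed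
    then show False using infinite_v by blast
  qed
  define u where "u n = v (i0 + 1 + int n)" for n
  have us: "\<not> mono (i0 + 1 + int n)" for n by (rule nm) simp
  have uadj: "site (i0 + 1 + int n) = Inr {u n, u (Suc n)} \<and> adj (u n) (u (Suc n))" for n
  proof -
    have e: "i0 + 1 + int n + 1 = i0 + 1 + int (Suc n)" by simp
    show ?thesis using nonmono[OF us[of n]] unfolding e by (simp add: u_def)
  qed
  have pu: "par (u n) = (par (u 0) = even n)" for n
  proof (induction n)
    case 0 then show ?case by simp
  next
    case (Suc n)
    have "par (u (Suc n)) \<noteq> par (u n)" using adj_par[OF conjunct2[OF uadj[of n]]] by blast
    then show ?case using Suc by auto
  qed
  have inj: "inj u"
  proof (rule injI)
    fix a b assume ab: "u a = u b"
    show "a = b"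
    proof (rule ccontr)
      assume ne: "a \<noteq> b"
      have "even a = even b" using pu[of a] pu[of b] ab by auto
      then have "even (i0 + 1 + int a) = even (i0 + 1 + int b)" by simp
      moreover have "i0 + 1 + int a \<noteq> i0 + 1 + int b" using ne by simp
      ultimately show False using no_rep ab unfolding u_def by blast
    qed
  qed
  have u0: "u 0 = v i0" using is_mono[OF m0] by (simp add: u_def)
  have s0: "site i0 = Inl (u 0)" using is_mono[OF m0] u0 by simp
  have "range site = {Inl (u 0)} \<union> range (\<lambda>n. Inr {u n, u (Suc n)})"
  proof
    show "range site \<subseteq> {Inl (u 0)} \<union> range (\<lambda>n. Inr {u n, u (Suc n)})"
    proof
      fix t assume "t \<in> range site"
      then obtain j where t: "t = site j" by blast
      consider "j = i0" | "i0 < j" | "j < i0" by linarith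
      then show "t \<in> {Inl (u 0)} \<union> range (\<lambda>n. Inr {u n, u (Suc n)})"
      proof cases
        case 1 then show ?thesis using t s0 by simp
      next
        case 2
        define n where "n = nat (j - i0 - 1)"
        have "j = i0 + 1 + int n" using 2 by (simp add: n_def)
        then show ?thesis using t uadj[of n] by simp
      next
        case 3
        define k where "k = nat (i0 - 1 - j)"
        have "j = i0 - 1 - int k" using 3 by (simp add: k_def)
        then have "site j = site (i0 + 1 + int k)" using site_reflect[OF m0, of k] by simp
        then show ?thesis using t uadj[of k] by simp
      qed
    qed
  next
    show "{Inl (u 0)} \<union> range (\<lambda>n. Inr {u n, u (Suc n)}) \<subseteq> range site"
    proof -
      have "Inl (u 0) \<in> range site" using s0 by (metis rangeI)
      moreover have "Inr {u n, u (Suc n)} \<in> range site" for n using uadj[of n] by (metis rangeI)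
      ultimately show ?thesis by blast
    qed
  qed
  then have "simple_inf_path (range site)"
    unfolding simple_inf_path_def using inj uadj by blast
  then show ?thesis by blast
qed

end

theorem lemma4p1:
  fixes J :: "'d::finite site \<Rightarrow> real" and M M' :: "'d site set"
  assumes "generic J"
    and "ground_state J M" and "ground_state J M'"
  shows "\<exists>\<P>. pairwise disjnt \<P> \<and> \<Union>\<P> = (M - M') \<union> (M' - M) \<and>
           (\<forall>P\<in>\<P>. simple_inf_path P \<or> biinf_path P)"
proof -
  have m: "is_matching M" and m': "is_matching M'" using assms(2,3) by (simp_all add: ground_state_def)
  define D where "D = (M - M') \<union> (M' - M)"
  define R where "R = {(s,t). s \<in> D \<and> t \<in> D \<and> (\<exists>w. covers s w \<and> covers t w)}"
  define cl where "cl s = R\<^sup>* `` {s}" for s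
  have Rsym: "sym R" by (auto simp: R_def sym_def)
  have Rs: "sym (R\<^sup>*)" by (rule sym_rtrancl[OF Rsym])
  have clD: "cl s \<subseteq> D" if sD: "s \<in> D" for s
  proof
    fix t assume "t \<in> cl s"
    then have "(s, t) \<in> R\<^sup>*" by (simp add: cl_def)
    then show "t \<in> D"
      by (induction rule: rtrancl_induct) (use sD in \<open>auto simp: R_def\<close>)
  qed
  have key: "simple_inf_path (cl s) \<or> biinf_path (cl s)" if sD: "s \<in> D" for s
  proof -
    have sS: "s \<in> Sigma_sites" using sD matching_Sigma[OF m] matching_Sigma[OF m'] by (auto simp: D_def)
    obtain v0 where sv0: "covers s v0"
    proof (cases s)
      case (Inl x) then show ?thesis using that by (simp add: covers_def)
    next
      case (Inr e)
      then obtain a b where "e = {a,b}" using Sigma_edge sS by metis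
      then show ?thesis using that Inr by (auto simp: covers_def)
    qed
    have sc: "s = cov M v0 \<and> s \<notin> M' \<or> s = cov M' v0 \<and> s \<notin> M"
      using sD cov_unique[OF m _ sv0] cov_unique[OF m' _ sv0] by (auto simp: D_def)
    have good0: "cov M v0 \<noteq> cov M' v0"
      using sc cov_in(1)[OF m, of v0] cov_in(1)[OF m', of v0] by metis
    have inv: "oth (if even i then M else M') (oth (if even i then M else M') x) = x" for i x
      using oth_oth[OF m] oth_oth[OF m'] by simp
    obtain v :: "int \<Rightarrow> 'd vtx" where v0: "v 0 = v0" and vs: "\<forall>i. v (i+1) = oth (if even i then M else M') (v i)"
      using walk_exists[where \<sigma>="\<lambda>i. oth (if even i then M else M')", OF inv, of v0] by blast
    interpret gwalk M M' v J
      by unfold_locales (use m m' vs v0 good0 assms in auto)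
    have "cl s = range site"
    proof
      show "cl s \<subseteq> range site"
      proof
        fix t assume "t \<in> cl s"
        then have "(s, t) \<in> R\<^sup>*" by (simp add: cl_def)
        then show "t \<in> range site"
        proof (induction rule: rtrancl_induct)
          case base
          then show ?case using sc cov_in_range[of 0] v0 by auto
        next
          case (step t t')
          then obtain w where w: "covers t w" "covers t' w" "t' \<in> D" by (auto simp: R_def)
          have c: "cov M w \<in> range site" "cov M' w \<in> range site" using closed[OF step(3) w(1)] by auto
          show ?case
          proof (cases "t' \<in> M")
            case True then show ?thesis using cov_unique[OF m True w(2)] c by simp
          next
            case False then have "t' \<in> M'" using w(3) by (auto simp: D_def)
            then show ?thesis using cov_unique[OF m' _ w(2)] c by simp
          qed
        qed
      qed
    next
      have RR: "(site i, site (i+1)) \<in> R" for i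
      proof -
        have "covers (site i) (v (i+1))" using site_next[of i] cov_in(2)[OF mNN] by metis
        moreover have "covers (site (i+1)) (v (i+1))" using cov_in(2)[OF mNN] by (simp add: site_def)
        ultimately show ?thesis using site_D unfolding R_def D_def by blast
      qed
      have s01: "s = site 0 \<or> s = site (-1)"
      proof -
        have "site 0 = cov M v0" using v0 by (simp add: site_def NN_def)
        moreover have "site (-1) = cov M' v0" using site_next[of "-1"] v0 by (simp add: NN_def)
        ultimately show ?thesis using sc by metis
      qed
      have base: "(s, site 0) \<in> R\<^sup>*"
        using s01 RR[of "-1"] by auto
      have all: "(s, site i) \<in> R\<^sup>*" for i
      proof (induction i rule: int_induct[where k=0])
        case base then show ?case using \<open>(s, site 0) \<in> R\<^sup>*\<close> .
      next
        case (step1 i) then show ?case using RR[of i] by (meson rtrancl.rtrancl_into_rtrancl)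
      next
        case (step2 i)
        have "(site (i - 1), site i) \<in> R" using RR[of "i - 1"] by simp
        then have "(site i, site (i - 1)) \<in> R" using Rsym by (meson symD)
        then show ?case using step2 by (meson rtrancl.rtrancl_into_rtrancl)
      qed
      show "range site \<subseteq> cl s" using all by (auto simp: cl_def)
    qed
    then show ?thesis using path by auto
  qed
  have disj: "pairwise disjnt (cl ` D)"
  proof (rule pairwiseI)
    fix P Q assume P: "P \<in> cl ` D" and Q: "Q \<in> cl ` D" and ne: "P \<noteq> Q"
    obtain a b where ab: "P = cl a" "Q = cl b" using P Q by blast
    show "disjnt P Q"
    proof (rule ccontr)
      assume "\<not> disjnt P Q"
      then obtain x where "x \<in> cl a" "x \<in> cl b" using ab by (auto simp: disjnt_def)
      then have ax: "(a, x) \<in> R\<^sup>*" and bx: "(b, x) \<in> R\<^sup>*" by (auto simp: cl_def)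
      have xa: "(x, a) \<in> R\<^sup>*" and xb: "(x, b) \<in> R\<^sup>*" using ax bx Rs by (auto dest: symD)
      have "cl a \<subseteq> cl b" using bx xa by (auto simp: cl_def intro: rtrancl_trans)
      moreover have "cl b \<subseteq> cl a" using ax xb by (auto simp: cl_def intro: rtrancl_trans)
      ultimately show False using ab ne by blast
    qed
  qed
  have un: "\<Union>(cl ` D) = D"
  proof
    show "\<Union>(cl ` D) \<subseteq> D" using clD by blast
    show "D \<subseteq> \<Union>(cl ` D)" by (auto simp: cl_def)
  qed
  show ?thesis
    by (rule exI[of _ "cl ` D"]) (use disj un key in \<open>auto simp: D_def\<close>)
qed

end
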